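(* Let $E$ be a nonzero $[\lambda]$-primitive theme. Then $E$ has a unique normal sub-(a,b)-module of rank $1$. Moreover, if $F\cong E_{\lambda_1}$ denotes this normal rank $1$ submodule, then the quotient $E/F$ is again a $[\lambda]$-primitive theme.
   Context: $\tilde{\mathcal A}$ is the $\mathbb C$-algebra of formal series $\sum_{\nu\ge0}P_\nu(a)b^\nu$ ($P_\nu\in\mathbb C[z]$) with product determined by $ab-ba=b^2$ and $b$-adic continuity of multiplication by $a$. An (a,b)-module is a left $\tilde{\mathcal A}$-module free of finite rank over $\mathbb C[[b]]$. Regular: contained in an (a,b)-module $E'$ with $aE'\subset bE'$; Bernstein polynomial: minimal polynomial of $-b^{-1}a$ on $E^\sharp/bE^\sharp$, $E^\sharp$ the saturation of $E$ by $b^{-1}a$. $E_\mu=\mathbb C[[b]]e_\mu$ with $ae_\mu=\mu be_\mu$. A submodule $F\subset E$ is normal if $F\cap bE=bF$. For rational $\lambda\in]0,1]$, $\Xi_\lambda=\bigoplus_{j\ge0}\mathbb C[[b]]e_{\lambda,j}$ (finite sums; $e_{\lambda,j}$ stands for $s^{\lambda-1}(\log s)^j/j!$) with $ae_{\lambda,0}=\lambda be_{\lambda,0}$, $ae_{\lambda,j}=\lambda be_{\lambda,j}+be_{\lambda,j-1}$, extended by $aS(b)=S(b)a+b^2S'(b)$; $\Xi=\bigoplus_{\lambda\in\mathbb Q\cap]0,1]}\Xi_\lambda$. A theme is a left $\tilde{\mathcal A}$-module isomorphic to $\tilde{\mathcal A}\varphi\subset\Xi$ for some $\varphi\in\Xi$.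 A regular (a,b)-module is $[\lambda]$-primitive if all roots of its Bernstein polynomial lie in $-\lambda+\mathbb Z$. *)

theory Defs
  imports "HOL-Computational_Algebra.Computational_Algebra"
begin

text \<open>An element of Xi is represented by its coordinates: x l j is the power series
  S(b) in front of e_{l,j}.  Only finitely many coordinates are nonzero and only
  rational l in ]0,1] may occur.\<close>

type_synonym xi = "rat \<Rightarrow> nat \<Rightarrow> complex fps"

definition Xi :: "xi set" where
  "Xi = {x. finite {(l, j). x l j \<noteq> 0} \<and> (\<forall>l j. x l j \<noteq> 0 \<longrightarrow> 0 < l \<and> l \<le> 1)}"

definition xi_zero :: xi where
  "xi_zero = (\<lambda>l j. 0)"

definition xi_add :: "xi \<Rightarrow> xi \<Rightarrow> xi" where
  "xi_add x y = (\<lambda>l j. x l j + y l j)"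

definition xi_smul :: "complex fps \<Rightarrow> xi \<Rightarrow> xi" where
  "xi_smul S x = (\<lambda>l j. S * x l j)"

definition xi_b :: "xi \<Rightarrow> xi" where
  "xi_b x = xi_smul fps_X x"

text \<open>Action of a:  a (S e_{l,j}) = S (l b e_{l,j} + b e_{l,j-1}) + b^2 S' e_{l,j}.\<close>
definition xi_a :: "xi \<Rightarrow> xi" where
  "xi_a x = (\<lambda>l j. fps_X * (fps_const (of_rat l) * x l j + x l (Suc j))
                     + fps_X ^ 2 * fps_deriv (x l j))"

definition poly_op :: "complex poly \<Rightarrow> (xi \<Rightarrow> xi) \<Rightarrow> xi \<Rightarrow> xi" where
  "poly_op p T x = (\<lambda>l j. \<Sum>i\<le>degree p. fps_const (coeff p i) * (T ^^ i) x l j)"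

text \<open>Action of the element sum_nu P_nu(a) b^nu of A~ (b-adically convergent sum;
  the nu-th term has b-order at least nu, so the n-th coefficient is a finite sum).\<close>
definition xi_act :: "(nat \<Rightarrow> complex poly) \<Rightarrow> xi \<Rightarrow> xi" where
  "xi_act P x = (\<lambda>l j. Abs_fps (\<lambda>n. \<Sum>\<nu>\<le>n. poly_op (P \<nu>) xi_a ((xi_b ^^ \<nu>) x) l j $ n))"

definition theme_gen :: "xi \<Rightarrow> xi set" where
  "theme_gen \<phi> = range (\<lambda>P. xi_act P \<phi>)"

definition sub_module :: "xi set \<Rightarrow> bool" where
  "sub_module F \<longleftrightarrow> (\<forall>x\<in>F. \<forall>y\<in>F. xi_add x y \<in> F) \<and> (\<forall>P. \<forall>x\<in>F. xi_act P x \<in> F)"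

text \<open>F is a sub-(a,b)-module of E of rank 1: A~-submodule, free of rank 1 over C[[b]].\<close>
definition rank1_sub :: "xi set \<Rightarrow> xi set \<Rightarrow> bool" where
  "rank1_sub E F \<longleftrightarrow> F \<subseteq> E \<and> sub_module F \<and> (\<exists>f. bij_betw (\<lambda>S. xi_smul S f) UNIV F)"

definition normal_sub :: "xi set \<Rightarrow> xi set \<Rightarrow> bool" where
  "normal_sub E F \<longleftrightarrow> F \<inter> xi_b ` E = xi_b ` F"

text \<open>b^{-1} a on Xi (a Xi is contained in b Xi).\<close>
definition xi_binva :: "xi \<Rightarrow> xi" where
  "xi_binva x = (\<lambda>l j. fps_shift 1 (xi_a x l j))"

definition xi_neg :: "xi \<Rightarrow> xi" where
  "xi_neg x = (\<lambda>l j. - x l j)"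

definition saturation :: "xi set \<Rightarrow> xi set" where
  "saturation E = \<Inter>{M. E \<subseteq> M \<and> (\<forall>x\<in>M. \<forall>y\<in>M. xi_add x y \<in> M)
                        \<and> (\<forall>S. \<forall>x\<in>M. xi_smul S x \<in> M) \<and> (\<forall>x\<in>M. xi_binva x \<in> M)}"

text \<open>p annihilates -b^{-1}a on E#/bE#.\<close>
definition annihilates :: "xi set \<Rightarrow> complex poly \<Rightarrow> bool" where
  "annihilates E p \<longleftrightarrow>
     (\<forall>x\<in>saturation E. poly_op p (\<lambda>y. xi_neg (xi_binva y)) x \<in> xi_b ` saturation E)"

text \<open>Bernstein polynomial: minimal (monic) polynomial of -b^{-1}a on E#/bE#.\<close>
definition is_bernstein_poly :: "xi set \<Rightarrow> complex poly \<Rightarrow> bool" where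
  "is_bernstein_poly E p \<longleftrightarrow> lead_coeff p = 1 \<and> annihilates E p \<and>
     (\<forall>q. q \<noteq> 0 \<longrightarrow> annihilates E q \<longrightarrow> degree p \<le> degree q)"

definition lambda_primitive :: "complex \<Rightarrow> xi set \<Rightarrow> bool" where
  "lambda_primitive lam E \<longleftrightarrow>
     (\<exists>p. is_bernstein_poly E p \<and> (\<forall>z. poly p z = 0 \<longrightarrow> (\<exists>n::int. z = - lam + of_int n)))"

text \<open>E/F is isomorphic (as A~-module) to a [lam]-primitive theme A~ psi.\<close>
definition quotient_primitive_theme :: "complex \<Rightarrow> xi set \<Rightarrow> xi set \<Rightarrow> bool" where
  "quotient_primitive_theme lam E F \<longleftrightarrow>
     (\<exists>\<psi>\<in>Xi. \<exists>T. (\<forall>x\<in>E. \<forall>y\<in>E. T (xi_add x y) = xi_add (T x) (T y))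
         \<and> (\<forall>P. \<forall>x\<in>E. T (xi_act P x) = xi_act P (T x))
         \<and> T ` E = theme_gen \<psi>
         \<and> {x\<in>E. T x = xi_zero} = F
         \<and> lambda_primitive lam (theme_gen \<psi>))"

end

theory Submission
  imports Defs
begin


lemma xi_b_nth: "xi_b y l j $ n = (if n = 0 then 0 else y l j $ (n - 1))"
  by (simp add: xi_b_def xi_smul_def)

lemma xi_b_nth_0 [simp]: "xi_b y l j $ 0 = 0" and xi_b_nth_Suc [simp]: "xi_b y l j $ Suc n = y l j $ n"
  by (simp_all add: xi_b_nth)

lemma xi_a_nth: "xi_a y l j $ n = (if n = 0 then 0 else
   (of_rat l + of_nat (n - 1)) * y l j $ (n - 1) + y l (Suc j) $ (n - 1))"
proof (cases n)
  case 0 then show ?thesis by (simp add: xi_a_def fps_X_power_mult_nth)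
next
  case (Suc m)
  show ?thesis
  proof (cases m)
    case 0 then show ?thesis using Suc by (simp add: xi_a_def fps_X_power_mult_nth fps_X_power_mult_right_nth algebra_simps)
  next
    case (Suc k)
    then show ?thesis using \<open>n = Suc m\<close>
      by (simp add: xi_a_def fps_X_power_mult_nth fps_X_power_mult_right_nth algebra_simps)
  qed
qed

lemma xi_a_nth_0 [simp]: "xi_a y l j $ 0 = 0"
  and xi_a_nth_Suc [simp]: "xi_a y l j $ Suc n = (of_rat l + of_nat n) * y l j $ n + y l (Suc j) $ n"
  by (simp_all add: xi_a_nth)

lemma xi_binva_nth [simp]: "xi_binva y l j $ n = (of_rat l + of_nat n) * y l j $ n + y l (Suc j) $ n"
  by (simp add: xi_binva_def)

lemma xi_add_nth [simp]: "xi_add x y l j $ n = x l j $ n + y l j $ n"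
  by (simp add: xi_add_def)

lemma xi_neg_nth [simp]: "xi_neg x l j $ n = - x l j $ n"
  by (simp add: xi_neg_def)

lemma xi_smul_const_nth [simp]: "xi_smul (fps_const c) x l j $ n = c * x l j $ n"
  by (simp add: xi_smul_def)

lemma xi_zero_nth [simp]: "xi_zero l j $ n = 0"
  by (simp add: xi_zero_def)

lemma xi_eqI: assumes "\<And>l j n. x l j $ n = y l j $ n" shows "x = y"
  using assms by (intro ext fps_ext) simp

lemma poly_op_nth: "poly_op p T x l j $ n = (\<Sum>i\<le>degree p. coeff p i * (T ^^ i) x l j $ n)"
  by (simp add: poly_op_def fps_sum_nth)

lemma poly_op_nth_N: assumes "degree p \<le> N"
  shows "poly_op p T x l j $ n = (\<Sum>i\<le>N. coeff p i * (T ^^ i) x l j $ n)"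
proof -
  have "(\<Sum>i\<le>N. coeff p i * (T ^^ i) x l j $ n) = (\<Sum>i\<le>degree p. coeff p i * (T ^^ i) x l j $ n)"
    by (rule sum.mono_neutral_right) (use assms in \<open>auto simp: coeff_eq_0 not_le\<close>)
  then show ?thesis by (simp add: poly_op_nth)
qed

lemma poly_op_add: "poly_op (p + q) T x = xi_add (poly_op p T x) (poly_op q T x)"
proof (rule xi_eqI)
  fix l j n
  define N where "N = max (degree p) (degree q)"
  have "degree (p + q) \<le> N" "degree p \<le> N" "degree q \<le> N"
    using degree_add_le[of p N q] N_def by auto
  then show "poly_op (p + q) T x l j $ n = xi_add (poly_op p T x) (poly_op q T x) l j $ n"
    by (simp add: poly_op_nth_N[where N=N] distrib_right sum.distrib)
qed

lemma poly_op_smult: "poly_op (smult c p) T x = xi_smul (fps_const c) (poly_op p T x)"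
proof (rule xi_eqI)
  fix l j n
  show "poly_op (smult c p) T x l j $ n = xi_smul (fps_const c) (poly_op p T x) l j $ n"
    by (simp add: poly_op_nth_N[where N="degree p"] degree_smult_le sum_distrib_left mult.assoc)
qed

lemma poly_op_const: "poly_op [:c:] T x = xi_smul (fps_const c) x"
  by (rule xi_eqI) (simp add: poly_op_nth)

lemma poly_op_zero: "poly_op 0 T x = xi_zero"
  by (rule xi_eqI) (simp add: poly_op_nth)

lemma poly_op_pCons0_right: "poly_op (pCons 0 p) T x = poly_op p T (T x)"
proof (rule xi_eqI)
  fix l j n
  have d: "degree (pCons 0 p) \<le> Suc (degree p)" by (simp add: degree_pCons_le)
  show "poly_op (pCons 0 p) T x l j $ n = poly_op p T (T x) l j $ n"
    by (simp add: poly_op_nth_N[OF d] poly_op_nth sum.atMost_Suc_shift funpow_Suc_right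
        del: sum.atMost_Suc funpow.simps)
qed

lemma poly_op_pCons0_a: "poly_op (pCons 0 p) xi_a x = xi_a (poly_op p xi_a x)"
proof (rule xi_eqI)
  fix l j n
  have d: "degree (pCons 0 p) \<le> Suc (degree p)" by (simp add: degree_pCons_le)
  show "poly_op (pCons 0 p) xi_a x l j $ n = xi_a (poly_op p xi_a x) l j $ n"
    by (cases n) (simp_all add: poly_op_nth_N[OF d] poly_op_nth sum.atMost_Suc_shift
        sum_distrib_left sum.distrib algebra_simps del: sum.atMost_Suc)
qed

lemma xi_a_add: "xi_a (xi_add x y) = xi_add (xi_a x) (xi_a y)"
  by (rule xi_eqI) (simp add: xi_a_nth algebra_simps)
lemma xi_a_smul: "xi_a (xi_smul (fps_const c) x) = xi_smul (fps_const c) (xi_a x)"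
  by (rule xi_eqI) (simp add: xi_a_nth algebra_simps)
lemma xi_b_add: "xi_b (xi_add x y) = xi_add (xi_b x) (xi_b y)"
  by (rule xi_eqI) (simp add: xi_b_nth algebra_simps)
lemma xi_b_smul: "xi_b (xi_smul (fps_const c) x) = xi_smul (fps_const c) (xi_b x)"
  by (rule xi_eqI) (simp add: xi_b_nth algebra_simps)

lemma xi_ba: "xi_b (xi_a y) = xi_add (xi_a (xi_b y)) (xi_neg (xi_b (xi_b y)))"
proof (rule xi_eqI)
  fix l j n show "xi_b (xi_a y) l j $ n = xi_add (xi_a (xi_b y)) (xi_neg (xi_b (xi_b y))) l j $ n"
    by (cases n; cases "n - 1") (simp_all add: algebra_simps)
qed

definition ordx :: "nat \<Rightarrow> xi \<Rightarrow> bool" where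
  "ordx \<nu> y \<longleftrightarrow> (\<forall>l j n. n < \<nu> \<longrightarrow> y l j $ n = 0)"

lemma ordx_b: "ordx \<nu> y \<Longrightarrow> ordx (Suc \<nu>) (xi_b y)"
  unfolding ordx_def by (auto simp: xi_b_nth)

lemma ordx_a: "ordx \<nu> y \<Longrightarrow> ordx \<nu> (xi_a y)"
  unfolding ordx_def by (auto simp: xi_a_nth)

lemma ordx_funpow_a: "ordx \<nu> y \<Longrightarrow> ordx \<nu> ((xi_a ^^ i) y)"
  by (induction i) (auto intro: ordx_a)

lemma ordx_poly_op: "ordx \<nu> y \<Longrightarrow> ordx \<nu> (poly_op p xi_a y)"
  using ordx_funpow_a unfolding ordx_def by (simp add: poly_op_nth)

lemma ordx_bpow: "ordx \<nu> ((xi_b ^^ \<nu>) x)"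
proof (induction \<nu>)
  case 0 then show ?case by (simp add: ordx_def)
next
  case (Suc \<nu>) then show ?case by (simp add: ordx_b)
qed

definition tm :: "(nat \<Rightarrow> complex poly) \<Rightarrow> xi \<Rightarrow> nat \<Rightarrow> xi" where
  "tm P x \<nu> = poly_op (P \<nu>) xi_a ((xi_b ^^ \<nu>) x)"

lemma tm_nth_zero: "n < \<nu> \<Longrightarrow> tm P x \<nu> l j $ n = 0"
  using ordx_poly_op[OF ordx_bpow] unfolding tm_def ordx_def by blast

lemma xi_act_nth: "xi_act P x l j $ n = (\<Sum>\<nu>\<le>n. tm P x \<nu> l j $ n)"
  by (simp add: xi_act_def tm_def)

lemma xi_act_nth_N: assumes "n \<le> N" shows "xi_act P x l j $ n = (\<Sum>\<nu>\<le>N. tm P x \<nu> l j $ n)"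
proof -
  have "(\<Sum>\<nu>\<le>N. tm P x \<nu> l j $ n) = (\<Sum>\<nu>\<le>n. tm P x \<nu> l j $ n)"
    by (rule sum.mono_neutral_right) (use assms in \<open>auto simp: tm_nth_zero\<close>)
  then show ?thesis by (simp add: xi_act_nth)
qed

lemma xi_act_add: "xi_act (\<lambda>\<nu>. P \<nu> + Q \<nu>) x = xi_add (xi_act P x) (xi_act Q x)"
  by (rule xi_eqI) (simp add: xi_act_nth tm_def poly_op_add sum.distrib)

lemma xi_act_smult: "xi_act (\<lambda>\<nu>. smult c (P \<nu>)) x = xi_smul (fps_const c) (xi_act P x)"
  by (rule xi_eqI) (simp add: xi_act_nth tm_def poly_op_smult sum_distrib_left)

lemma tm_pCons0: "tm (\<lambda>\<nu>. pCons 0 (P \<nu>)) x \<nu> = xi_a (tm P x \<nu>)"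
  by (simp add: tm_def poly_op_pCons0_a)

lemma xi_act_pCons0: "xi_act (\<lambda>\<nu>. pCons 0 (P \<nu>)) x = xi_a (xi_act P x)"
proof (rule xi_eqI)
  fix l j n
  show "xi_act (\<lambda>\<nu>. pCons 0 (P \<nu>)) x l j $ n = xi_a (xi_act P x) l j $ n"
  proof (cases n)
    case 0 then show ?thesis by (simp add: xi_act_nth tm_pCons0)
  next
    case (Suc m)
    have "xi_a (xi_act P x) l j $ n = (of_rat l + of_nat m) * xi_act P x l j $ m + xi_act P x l (Suc j) $ m"
      by (simp add: Suc)
    also have "\<dots> = (\<Sum>\<nu>\<le>Suc m. (of_rat l + of_nat m) * tm P x \<nu> l j $ m + tm P x \<nu> l (Suc j) $ m)"
      by (simp only: xi_act_nth_N[of m "Suc m"] le_SucI order_refl sum_distrib_left sum.distrib)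
    also have "\<dots> = xi_act (\<lambda>\<nu>. pCons 0 (P \<nu>)) x l j $ n"
      by (simp only: xi_act_nth tm_pCons0 Suc xi_a_nth_Suc)
    finally show ?thesis by simp
  qed
qed

lemma xi_act_single: "xi_act (\<lambda>\<nu>. if \<nu> = k then p else 0) x = poly_op p xi_a ((xi_b ^^ k) x)"
proof (rule xi_eqI)
  fix l j n
  show "xi_act (\<lambda>\<nu>. if \<nu> = k then p else 0) x l j $ n = poly_op p xi_a ((xi_b ^^ k) x) l j $ n"
  proof (cases "n < k")
    case True
    then show ?thesis using ordx_poly_op[OF ordx_bpow, of k p x]
      by (auto simp: xi_act_nth tm_def poly_op_zero ordx_def intro!: sum.neutral)
  next
    case False
    then have "(\<Sum>\<nu>\<le>n. tm (\<lambda>\<nu>. if \<nu> = k then p else 0) x \<nu> l j $ n) = tm (\<lambda>\<nu>. if \<nu> = k then p else 0) x k l j $ n"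
    proof -
      have "(\<Sum>\<nu>\<le>n. tm (\<lambda>\<nu>. if \<nu> = k then p else 0) x \<nu> l j $ n) = (\<Sum>\<nu>\<in>{k}. tm (\<lambda>\<nu>. if \<nu> = k then p else 0) x \<nu> l j $ n)"
        by (rule sum.mono_neutral_right) (use False in \<open>auto simp: tm_def poly_op_zero\<close>)
      then show ?thesis by simp
    qed
    then show ?thesis by (simp add: xi_act_nth tm_def)
  qed
qed

lemma xi_act_id: "xi_act (\<lambda>\<nu>. if \<nu> = 0 then 1 else 0) x = x"
proof -
  have "xi_act (\<lambda>\<nu>. if \<nu> = 0 then 1 else 0) x = poly_op [:1:] xi_a ((xi_b ^^ 0) x)"
    using xi_act_single[of 0 1 x] by (simp add: one_pCons)
  also have "\<dots> = x" by (rule xi_eqI) (simp add: poly_op_const xi_smul_def)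
  finally show ?thesis .
qed




definition ordP :: "nat \<Rightarrow> (nat \<Rightarrow> complex poly) \<Rightarrow> bool" where
  "ordP \<nu> Q \<longleftrightarrow> (\<forall>\<mu><\<nu>. Q \<mu> = 0)"

lemma poly_op_sum: "finite A \<Longrightarrow> poly_op (\<Sum>i\<in>A. p i) T x l j $ n = (\<Sum>i\<in>A. poly_op (p i) T x l j $ n)"
  by (induction A rule: finite_induct) (simp_all add: poly_op_zero poly_op_add)

lemma tm_zero: "R \<mu> = 0 \<Longrightarrow> tm R x \<mu> = xi_zero"
  by (simp add: tm_def poly_op_zero)

lemma xi_act_sum:
  assumes "\<And>\<nu>. ordP \<nu> (R \<nu>)"
  shows "xi_act (\<lambda>\<mu>. \<Sum>\<nu>\<le>\<mu>. R \<nu> \<mu>) x l j $ n = (\<Sum>\<nu>\<le>n. xi_act (R \<nu>) x l j $ n)"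
proof -
  have "xi_act (\<lambda>\<mu>. \<Sum>\<nu>\<le>\<mu>. R \<nu> \<mu>) x l j $ n = (\<Sum>\<mu>\<le>n. \<Sum>\<nu>\<le>\<mu>. tm (R \<nu>) x \<mu> l j $ n)"
    by (simp add: xi_act_nth tm_def poly_op_sum)
  also have "\<dots> = (\<Sum>\<mu>\<le>n. \<Sum>\<nu>\<le>n. tm (R \<nu>) x \<mu> l j $ n)"
  proof (rule sum.cong[OF refl])
    fix \<mu> assume "\<mu> \<in> {..n}"
    then show "(\<Sum>\<nu>\<le>\<mu>. tm (R \<nu>) x \<mu> l j $ n) = (\<Sum>\<nu>\<le>n. tm (R \<nu>) x \<mu> l j $ n)"
      using assms by (intro sum.mono_neutral_left) (auto simp: ordP_def tm_zero)
  qed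
  also have "\<dots> = (\<Sum>\<nu>\<le>n. \<Sum>\<mu>\<le>n. tm (R \<nu>) x \<mu> l j $ n)"
    by (rule sum.swap)
  also have "\<dots> = (\<Sum>\<nu>\<le>n. xi_act (R \<nu>) x l j $ n)"
    by (simp add: xi_act_nth)
  finally show ?thesis .
qed

lemma poly_op_deg0: "degree p = 0 \<Longrightarrow> poly_op p T y l j $ n = coeff p 0 * y l j $ n"
  by (simp add: poly_op_nth)

lemma bmul_const:
  assumes "\<And>\<mu>. degree (Q \<mu>) = 0"
  shows "xi_b (xi_act Q x) = xi_act (\<lambda>\<mu>. case \<mu> of 0 \<Rightarrow> 0 | Suc \<mu>' \<Rightarrow> Q \<mu>') x"
proof (rule xi_eqI)
  fix l j n
  show "xi_b (xi_act Q x) l j $ n = xi_act (\<lambda>\<mu>. case \<mu> of 0 \<Rightarrow> 0 | Suc \<mu>' \<Rightarrow> Q \<mu>') x l j $ n"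
  proof (cases n)
    case 0 then show ?thesis by (simp add: xi_act_nth tm_def poly_op_zero)
  next
    case (Suc m)
    have "xi_act (\<lambda>\<mu>. case \<mu> of 0 \<Rightarrow> 0 | Suc \<mu>' \<Rightarrow> Q \<mu>') x l j $ n =
        (\<Sum>\<mu>\<le>m. tm (\<lambda>\<mu>. case \<mu> of 0 \<Rightarrow> 0 | Suc \<mu>' \<Rightarrow> Q \<mu>') x (Suc \<mu>) l j $ Suc m)"
      by (simp add: xi_act_nth Suc sum.atMost_Suc_shift tm_def poly_op_zero del: sum.atMost_Suc)
    also have "\<dots> = (\<Sum>\<mu>\<le>m. tm Q x \<mu> l j $ m)"
      by (simp add: tm_def poly_op_deg0 assms)
    finally show ?thesis by (simp add: Suc xi_act_nth)
  qed
qed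

lemma xi_neg_smul: "xi_neg z = xi_smul (fps_const (-1)) z"
  by (rule xi_eqI) simp

lemma xi_act_neg: "xi_act (\<lambda>\<mu>. - P \<mu>) x = xi_neg (xi_act P x)"
  using xi_act_smult[of "-1" P x] by (simp add: xi_neg_smul)

lemma pCons_split: obtains q where "p = pCons (coeff p 0) q" "degree q \<le> degree p - 1" "p = 0 \<Longrightarrow> q = 0"
proof (cases p)
  case (pCons a q)
  then show ?thesis using that[of q] by (cases "q = 0") auto
qed

lemma bmul_bounded:
  "\<forall>Q. (\<forall>\<mu>. degree (Q \<mu>) \<le> k) \<longrightarrow> (\<exists>Q'. (\<forall>\<mu>. degree (Q' \<mu>) \<le> k) \<and>
      (\<forall>\<nu>. ordP \<nu> Q \<longrightarrow> ordP (Suc \<nu>) Q') \<and> (\<forall>x. xi_b (xi_act Q x) = xi_act Q' x))"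
proof (induction k)
  case 0
  show ?case
  proof (intro allI impI)
    fix Q :: "nat \<Rightarrow> complex poly" assume "\<forall>\<mu>. degree (Q \<mu>) \<le> 0"
    then have d: "\<And>\<mu>. degree (Q \<mu>) = 0" by auto
    show "\<exists>Q'. (\<forall>\<mu>. degree (Q' \<mu>) \<le> 0) \<and> (\<forall>\<nu>. ordP \<nu> Q \<longrightarrow> ordP (Suc \<nu>) Q') \<and> (\<forall>x. xi_b (xi_act Q x) = xi_act Q' x)"
      by (rule exI[of _ "\<lambda>\<mu>. case \<mu> of 0 \<Rightarrow> 0 | Suc \<mu>' \<Rightarrow> Q \<mu>'"])
        (auto simp: bmul_const[OF d] d ordP_def split: nat.split)
  qed
next
  case (Suc k)
  show ?case
  proof (intro allI impI)
    fix Q :: "nat \<Rightarrow> complex poly" assume dQ: "\<forall>\<mu>. degree (Q \<mu>) \<le> Suc k"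
    define C where "C \<mu> = [:coeff (Q \<mu>) 0:]" for \<mu>
    have "\<forall>\<mu>. \<exists>q. Q \<mu> = pCons (coeff (Q \<mu>) 0) q \<and> degree q \<le> degree (Q \<mu>) - 1 \<and> (Q \<mu> = 0 \<longrightarrow> q = 0)"
      by (metis pCons_split)
    then obtain Qt where Qt: "\<And>\<mu>. Q \<mu> = pCons (coeff (Q \<mu>) 0) (Qt \<mu>)" "\<And>\<mu>. degree (Qt \<mu>) \<le> degree (Q \<mu>) - 1"
      "\<And>\<mu>. Q \<mu> = 0 \<Longrightarrow> Qt \<mu> = 0" by metis
    have dQt: "\<forall>\<mu>. degree (Qt \<mu>) \<le> k" using Qt(2) dQ by (metis diff_Suc_1 diff_le_mono le_trans)
    have Qsplit: "Q = (\<lambda>\<mu>. C \<mu> + pCons 0 (Qt \<mu>))"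
    proof
      fix \<mu> show "Q \<mu> = C \<mu> + pCons 0 (Qt \<mu>)"
        by (subst Qt(1)) (simp add: C_def)
    qed
    obtain Q1 where Q1: "\<forall>\<mu>. degree (Q1 \<mu>) \<le> k" "\<forall>\<nu>. ordP \<nu> Qt \<longrightarrow> ordP (Suc \<nu>) Q1"
      "\<forall>x. xi_b (xi_act Qt x) = xi_act Q1 x"
      using Suc.IH dQt by blast
    obtain Q2 where Q2: "\<forall>\<mu>. degree (Q2 \<mu>) \<le> k" "\<forall>\<nu>. ordP \<nu> Q1 \<longrightarrow> ordP (Suc \<nu>) Q2"
      "\<forall>x. xi_b (xi_act Q1 x) = xi_act Q2 x"
      using Suc.IH Q1(1) by blast
    define C' where "C' \<mu> = (case \<mu> of 0 \<Rightarrow> 0 | Suc \<mu>' \<Rightarrow> C \<mu>')" for \<mu>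
    have dC: "\<And>\<mu>. degree (C \<mu>) = 0" by (simp add: C_def)
    define Q' where "Q' \<mu> = C' \<mu> + pCons 0 (Q1 \<mu>) + - Q2 \<mu>" for \<mu>
    have eq: "xi_b (xi_act Q x) = xi_act Q' x" for x
    proof -
      have "xi_act Q x = xi_add (xi_act C x) (xi_a (xi_act Qt x))"
        by (subst Qsplit) (simp add: xi_act_add xi_act_pCons0)
      then have "xi_b (xi_act Q x) = xi_add (xi_b (xi_act C x)) (xi_add (xi_a (xi_b (xi_act Qt x))) (xi_neg (xi_b (xi_b (xi_act Qt x)))))"
        by (simp add: xi_b_add xi_ba)
      also have "\<dots> = xi_add (xi_act C' x) (xi_add (xi_act (\<lambda>\<mu>. pCons 0 (Q1 \<mu>)) x) (xi_act (\<lambda>\<mu>. - Q2 \<mu>) x))"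
        unfolding C'_def by (simp add: bmul_const[OF dC] Q1(3) Q2(3) xi_act_pCons0 xi_act_neg)
      also have "\<dots> = xi_act Q' x"
        unfolding Q'_def[abs_def] xi_act_add by (rule xi_eqI) simp
      finally show ?thesis .
    qed
    have dQ': "\<forall>\<mu>. degree (Q' \<mu>) \<le> Suc k"
    proof
      fix \<mu>
      have "degree (C' \<mu>) \<le> Suc k" by (simp add: C'_def C_def split: nat.split)
      moreover have "degree (pCons 0 (Q1 \<mu>)) \<le> Suc k" using Q1(1) degree_pCons_le[of 0 "Q1 \<mu>"] by auto
      moreover have "degree (- Q2 \<mu>) \<le> Suc k" using le_SucI[OF spec[OF Q2(1), of \<mu>]] by simp
      ultimately show "degree (Q' \<mu>) \<le> Suc k" unfolding Q'_def by (intro degree_add_le) auto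
    qed
    have oQ': "\<forall>\<nu>. ordP \<nu> Q \<longrightarrow> ordP (Suc \<nu>) Q'"
    proof (intro allI impI)
      fix \<nu> assume o: "ordP \<nu> Q"
      then have "ordP \<nu> Qt" using Qt(3) by (auto simp: ordP_def)
      then have o1: "ordP (Suc \<nu>) Q1" using Q1(2) by blast
      then have o2: "ordP (Suc (Suc \<nu>)) Q2" using Q2(2) by blast
      have oC: "ordP (Suc \<nu>) C'" using o by (auto simp: ordP_def C'_def C_def split: nat.split)
      show "ordP (Suc \<nu>) Q'" using o1 o2 oC by (auto simp: ordP_def Q'_def)
    qed
    show "\<exists>Q'. (\<forall>\<mu>. degree (Q' \<mu>) \<le> Suc k) \<and> (\<forall>\<nu>. ordP \<nu> Q \<longrightarrow> ordP (Suc \<nu>) Q') \<and> (\<forall>x. xi_b (xi_act Q x) = xi_act Q' x)"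
      using dQ' oQ' eq by blast
  qed
qed

lemma bmul_general: "\<exists>Q'. (\<forall>\<nu>. ordP \<nu> Q \<longrightarrow> ordP (Suc \<nu>) Q') \<and> (\<forall>x. xi_b (xi_act Q x) = xi_act Q' x)"
proof -
  define S where "S \<mu> = (\<lambda>\<mu>'. if \<mu>' = \<mu> then Q \<mu> else 0)" for \<mu>
  have "\<forall>\<mu>. \<exists>Q'. (\<forall>\<nu>. ordP \<nu> (S \<mu>) \<longrightarrow> ordP (Suc \<nu>) Q') \<and> (\<forall>x. xi_b (xi_act (S \<mu>) x) = xi_act Q' x)"
  proof
    fix \<mu>
    have "\<forall>\<mu>'. degree (S \<mu> \<mu>') \<le> degree (Q \<mu>)" by (simp add: S_def)
    then show "\<exists>Q'. (\<forall>\<nu>. ordP \<nu> (S \<mu>) \<longrightarrow> ordP (Suc \<nu>) Q') \<and> (\<forall>x. xi_b (xi_act (S \<mu>) x) = xi_act Q' x)"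
      using bmul_bounded[of "degree (Q \<mu>)"] by blast
  qed
  then obtain S' where S': "\<And>\<mu> \<nu>. ordP \<nu> (S \<mu>) \<Longrightarrow> ordP (Suc \<nu>) (S' \<mu>)"
    "\<And>\<mu> x. xi_b (xi_act (S \<mu>) x) = xi_act (S' \<mu>) x" by metis
  have oS: "ordP (Suc \<mu>) (S' \<mu>)" for \<mu>
    by (rule S'(1)) (auto simp: ordP_def S_def)
  define Q' where "Q' \<mu>' = (\<Sum>\<mu>\<le>\<mu>'. S' \<mu> \<mu>')" for \<mu>'
  have eq: "xi_b (xi_act Q x) = xi_act Q' x" for x
  proof (rule xi_eqI)
    fix l j n
    have "xi_act Q' x l j $ n = (\<Sum>\<mu>\<le>n. xi_act (S' \<mu>) x l j $ n)"
      unfolding Q'_def[abs_def] by (rule xi_act_sum) (use oS in \<open>auto simp: ordP_def\<close>)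
    also have "\<dots> = (\<Sum>\<mu>\<le>n. xi_b (tm Q x \<mu>) l j $ n)"
      by (simp add: S'(2)[symmetric] S_def xi_act_single tm_def)
    also have "\<dots> = xi_b (xi_act Q x) l j $ n"
    proof (cases n)
      case (Suc m) then show ?thesis
        by (simp add: xi_act_nth_N[of m "Suc m"] del: sum.atMost_Suc)
    qed simp
    finally show "xi_b (xi_act Q x) l j $ n = xi_act Q' x l j $ n" by simp
  qed
  have oQ: "ordP (Suc \<nu>) Q'" if "ordP \<nu> Q" for \<nu>
  proof -
    have "S' \<mu> \<mu>' = 0" if "\<mu>' < Suc \<nu>" "\<mu> \<le> \<mu>'" for \<mu> \<mu>'
    proof (cases "\<mu> < \<nu>")
      case True
      then have "Q \<mu> = 0" using \<open>ordP \<nu> Q\<close> by (simp add: ordP_def)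
      then have "\<forall>\<nu>'. ordP \<nu>' (S \<mu>)" by (simp add: ordP_def S_def)
      then have "ordP (Suc \<mu>') (S' \<mu>)" using S'(1) by blast
      then show ?thesis by (simp add: ordP_def)
    next
      case False then show ?thesis using oS[of \<mu>] that by (simp add: ordP_def)
    qed
    then show ?thesis by (simp add: ordP_def Q'_def)
  qed
  show ?thesis using eq oQ by blast
qed

lemma bpow_general: "\<exists>Q'. ordP \<nu> Q' \<and> (\<forall>x. (xi_b ^^ \<nu>) (xi_act Q x) = xi_act Q' x)"
proof (induction \<nu>)
  case 0 then show ?case by (auto simp: ordP_def)
next
  case (Suc \<nu>)
  then obtain Q1 where "ordP \<nu> Q1" "\<forall>x. (xi_b ^^ \<nu>) (xi_act Q x) = xi_act Q1 x" by blast
  moreover obtain Q2 where "\<forall>\<nu>. ordP \<nu> Q1 \<longrightarrow> ordP (Suc \<nu>) Q2" "\<forall>x. xi_b (xi_act Q1 x) = xi_act Q2 x"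
    using bmul_general by blast
  ultimately show ?case by auto
qed

lemma polya: "poly_op p xi_a (xi_act Q x) = xi_act (\<lambda>\<mu>. p * Q \<mu>) x"
proof (induction p rule: pCons_induct)
  case 0 then show ?case
    by (rule xi_eqI) (simp add: poly_op_zero xi_act_nth tm_def)
next
  case (pCons c p)
  have "pCons c p = [:c:] + pCons 0 p" by simp
  then have "poly_op (pCons c p) xi_a (xi_act Q x) = xi_add (xi_smul (fps_const c) (xi_act Q x)) (xi_a (poly_op p xi_a (xi_act Q x)))"
    by (metis poly_op_add poly_op_const poly_op_pCons0_a)
  also have "\<dots> = xi_act (\<lambda>\<mu>. smult c (Q \<mu>) + pCons 0 (p * Q \<mu>)) x"
    by (simp add: pCons.IH xi_act_add xi_act_smult xi_act_pCons0)
  finally show ?case by simp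
qed

lemma compose: "\<exists>R. \<forall>x. xi_act P (xi_act Q x) = xi_act R x"
proof -
  have "\<forall>\<nu>. \<exists>Q'. ordP \<nu> Q' \<and> (\<forall>x. (xi_b ^^ \<nu>) (xi_act Q x) = xi_act Q' x)"
    using bpow_general by blast
  then obtain Qn where Qn: "\<And>\<nu>. ordP \<nu> (Qn \<nu>)" "\<And>\<nu> x. (xi_b ^^ \<nu>) (xi_act Q x) = xi_act (Qn \<nu>) x"
    by metis
  define RR where "RR \<nu> \<mu> = P \<nu> * Qn \<nu> \<mu>" for \<nu> \<mu>
  have oR: "ordP \<nu> (RR \<nu>)" for \<nu> using Qn(1)[of \<nu>] by (simp add: ordP_def RR_def)
  define R where "R \<mu> = (\<Sum>\<nu>\<le>\<mu>. RR \<nu> \<mu>)" for \<mu>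
  have "xi_act P (xi_act Q x) = xi_act R x" for x
  proof (rule xi_eqI)
    fix l j n
    have "xi_act R x l j $ n = (\<Sum>\<nu>\<le>n. xi_act (RR \<nu>) x l j $ n)"
      unfolding R_def[abs_def] by (rule xi_act_sum[OF oR])
    also have "\<dots> = (\<Sum>\<nu>\<le>n. tm P (xi_act Q x) \<nu> l j $ n)"
      by (simp add: tm_def Qn(2) polya RR_def[abs_def])
    finally show "xi_act P (xi_act Q x) l j $ n = xi_act R x l j $ n" by (simp add: xi_act_nth)
  qed
  then show ?thesis by blast
qed




lemma bpow_nth: "(xi_b ^^ \<nu>) x l j $ n = (if n < \<nu> then 0 else x l j $ (n - \<nu>))"
  by (induction \<nu> arbitrary: n) (auto simp: xi_b_nth)

lemma xi_smul_as_act: "xi_smul S x = xi_act (\<lambda>\<nu>. [:S $ \<nu>:]) x"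
proof (rule xi_eqI)
  fix l j n
  have "xi_act (\<lambda>\<nu>. [:S $ \<nu>:]) x l j $ n = (\<Sum>\<nu>\<le>n. S $ \<nu> * x l j $ (n - \<nu>))"
    by (simp add: xi_act_nth tm_def poly_op_const bpow_nth)
  also have "\<dots> = (S * x l j) $ n"
    by (simp add: fps_mult_nth atLeast0AtMost)
  finally show "xi_smul S x l j $ n = xi_act (\<lambda>\<nu>. [:S $ \<nu>:]) x l j $ n"
    by (simp add: xi_smul_def)
qed

lemma xi_b_as_act: "xi_b x = xi_act (\<lambda>\<nu>. if \<nu> = 1 then 1 else 0) x"
  by (simp add: xi_act_single poly_op_const one_pCons xi_smul_def)

lemma xi_a_as_act: "xi_a x = xi_act (\<lambda>\<nu>. if \<nu> = 0 then [:0,1:] else 0) x"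
proof -
  have "xi_act (\<lambda>\<nu>. if \<nu> = 0 then [:0,1:] else 0) x = poly_op (pCons 0 1) xi_a x"
    by (simp add: xi_act_single one_pCons)
  also have "\<dots> = xi_a (poly_op [:1:] xi_a x)" by (simp add: poly_op_pCons0_a one_pCons)
  also have "\<dots> = xi_a x" by (simp add: poly_op_const xi_smul_def)
  finally show ?thesis by simp
qed

lemma theme_phi: "\<phi> \<in> theme_gen \<phi>"
  unfolding theme_gen_def by (rule range_eqI[where x="\<lambda>\<nu>. if \<nu> = 0 then 1 else 0"]) (simp add: xi_act_id)

lemma theme_act: assumes "x \<in> theme_gen \<phi>" shows "xi_act P x \<in> theme_gen \<phi>"
proof -
  obtain Q where "x = xi_act Q \<phi>" using assms unfolding theme_gen_def by blast
  moreover obtain R where "\<forall>x. xi_act P (xi_act Q x) = xi_act R x" using compose by blast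
  ultimately show ?thesis unfolding theme_gen_def by auto
qed

lemma theme_add: assumes "x \<in> theme_gen \<phi>" "y \<in> theme_gen \<phi>" shows "xi_add x y \<in> theme_gen \<phi>"
proof -
  obtain P Q where "x = xi_act P \<phi>" "y = xi_act Q \<phi>" using assms unfolding theme_gen_def by blast
  then have "xi_add x y = xi_act (\<lambda>\<nu>. P \<nu> + Q \<nu>) \<phi>" by (simp add: xi_act_add)
  then show ?thesis unfolding theme_gen_def by blast
qed

lemma theme_smul: "x \<in> theme_gen \<phi> \<Longrightarrow> xi_smul S x \<in> theme_gen \<phi>"
  by (simp add: xi_smul_as_act theme_act)
lemma theme_a: "x \<in> theme_gen \<phi> \<Longrightarrow> xi_a x \<in> theme_gen \<phi>"
  unfolding xi_a_as_act by (rule theme_act)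
lemma theme_b: "x \<in> theme_gen \<phi> \<Longrightarrow> xi_b x \<in> theme_gen \<phi>"
  unfolding xi_b_as_act by (rule theme_act)

lemma theme_sub: "sub_module (theme_gen \<phi>)"
  by (simp add: sub_module_def theme_add theme_act)

section \<open>Vanishing / support\<close>

definition vanish :: "rat \<Rightarrow> nat \<Rightarrow> xi \<Rightarrow> bool" where
  "vanish l j y \<longleftrightarrow> (\<forall>j'\<ge>j. y l j' = 0)"

lemma vanish_nth: "vanish l j y \<Longrightarrow> j \<le> j' \<Longrightarrow> y l j' $ n = 0"
  by (simp add: vanish_def)

lemma vanish_iff: "vanish l j y \<longleftrightarrow> (\<forall>j'\<ge>j. \<forall>n. y l j' $ n = 0)"
  by (auto simp: vanish_def fps_eq_iff)

lemma vanish_a: "vanish l j y \<Longrightarrow> vanish l j (xi_a y)"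
  by (simp add: vanish_iff xi_a_nth)
lemma vanish_b: "vanish l j y \<Longrightarrow> vanish l j (xi_b y)"
  by (simp add: vanish_iff xi_b_nth)
lemma vanish_binva: "vanish l j y \<Longrightarrow> vanish l j (xi_binva y)"
  by (simp add: vanish_iff)
lemma vanish_smul: "vanish l j y \<Longrightarrow> vanish l j (xi_smul S y)"
  by (simp add: vanish_def xi_smul_def)
lemma vanish_add: "vanish l j y \<Longrightarrow> vanish l j z \<Longrightarrow> vanish l j (xi_add y z)"
  by (simp add: vanish_def xi_add_def)
lemma vanish_funpow: "(\<And>y. vanish l j y \<Longrightarrow> vanish l j (T y)) \<Longrightarrow> vanish l j y \<Longrightarrow> vanish l j ((T ^^ i) y)"
  by (induction i) auto
lemma vanish_poly_op: "(\<And>y. vanish l j y \<Longrightarrow> vanish l j (T y)) \<Longrightarrow> vanish l j y \<Longrightarrow> vanish l j (poly_op p T y)"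
  using vanish_funpow[of l j T y] by (simp add: vanish_iff poly_op_nth)
lemma vanish_act: "vanish l j y \<Longrightarrow> vanish l j (xi_act P y)"
proof -
  assume v: "vanish l j y"
  have "vanish l j (tm P y \<nu>)" for \<nu>
    unfolding tm_def using vanish_poly_op[of l j xi_a, OF vanish_a] vanish_funpow[of l j xi_b, OF vanish_b v] by blast
  then show ?thesis by (simp add: vanish_iff xi_act_nth)
qed

definition supp_set :: "xi \<Rightarrow> xi set" where
  "supp_set \<phi> = {x. \<forall>l j. vanish l j \<phi> \<longrightarrow> x l j = 0}"

lemma supp_vanish: "x \<in> supp_set \<phi> \<Longrightarrow> vanish l j \<phi> \<Longrightarrow> vanish l j x"
  unfolding supp_set_def vanish_def by auto

lemma theme_supp: "theme_gen \<phi> \<subseteq> supp_set \<phi>"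
proof
  fix x assume "x \<in> theme_gen \<phi>"
  then obtain P where x: "x = xi_act P \<phi>" unfolding theme_gen_def by blast
  show "x \<in> supp_set \<phi>" unfolding supp_set_def
  proof (intro CollectI allI impI)
    fix l j assume "vanish l j \<phi>"
    then have "vanish l j x" unfolding x by (rule vanish_act)
    then show "x l j = 0" by (simp add: vanish_def)
  qed
qed

lemma sat_sub:
  assumes "E \<subseteq> M" "\<And>x y. x \<in> M \<Longrightarrow> y \<in> M \<Longrightarrow> xi_add x y \<in> M" "\<And>S x. x \<in> M \<Longrightarrow> xi_smul S x \<in> M"
    "\<And>x. x \<in> M \<Longrightarrow> xi_binva x \<in> M"
  shows "saturation E \<subseteq> M"
  unfolding saturation_def apply (rule Inter_lower) apply (rule CollectI) using assms by blast
lemma sat_mem: "x \<in> saturation E \<longleftrightarrow> (\<forall>M. E \<subseteq> M \<and> (\<forall>x\<in>M. \<forall>y\<in>M. xi_add x y \<in> M)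
                        \<and> (\<forall>S. \<forall>x\<in>M. xi_smul S x \<in> M) \<and> (\<forall>x\<in>M. xi_binva x \<in> M) \<longrightarrow> x \<in> M)"
  by (simp only: saturation_def Inter_iff mem_Collect_eq Ball_def)
lemma sat_base: "E \<subseteq> saturation E"
  unfolding saturation_def by (rule Inter_greatest) simp
lemma sat_add: "x \<in> saturation E \<Longrightarrow> y \<in> saturation E \<Longrightarrow> xi_add x y \<in> saturation E"
  unfolding sat_mem by blast
lemma sat_smul: "x \<in> saturation E \<Longrightarrow> xi_smul S x \<in> saturation E"
  unfolding sat_mem by blast
lemma sat_binva: "x \<in> saturation E \<Longrightarrow> xi_binva x \<in> saturation E"
  unfolding sat_mem by blast

lemma sat_supp: "saturation (theme_gen \<phi>) \<subseteq> supp_set \<phi>"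
proof (rule sat_sub)
  show "theme_gen \<phi> \<subseteq> supp_set \<phi>" by (rule theme_supp)
next
  fix x y assume "x \<in> supp_set \<phi>" "y \<in> supp_set \<phi>"
  then show "xi_add x y \<in> supp_set \<phi>" by (simp add: supp_set_def xi_add_def)
next
  fix S x assume "x \<in> supp_set \<phi>"
  then show "xi_smul S x \<in> supp_set \<phi>" by (simp add: supp_set_def xi_smul_def)
next
  fix x assume x: "x \<in> supp_set \<phi>"
  show "xi_binva x \<in> supp_set \<phi>" unfolding supp_set_def
  proof (intro CollectI allI impI)
    fix l j assume "vanish l j \<phi>"
    then have "vanish l j (xi_binva x)" using supp_vanish[OF x] vanish_binva by blast
    then show "xi_binva x l j = 0" by (simp add: vanish_def)
  qed
qed




definition Tn :: "xi \<Rightarrow> xi" where "Tn y = xi_neg (xi_binva y)"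

lemma annihilates_Tn: "annihilates E p \<longleftrightarrow> (\<forall>x\<in>saturation E. poly_op p Tn x \<in> xi_b ` saturation E)"
  by (simp add: annihilates_def Tn_def[abs_def])

lemma Tn_nth: "Tn y l j $ n = - ((of_rat l + of_nat n) * y l j $ n + y l (Suc j) $ n)"
  by (simp add: Tn_def)

lemma Tn_pow_top:
  assumes "\<forall>j>K. y l j = 0"
  shows "(\<forall>j>K. (Tn ^^ i) y l j = 0) \<and> (\<forall>n. (Tn ^^ i) y l K $ n = (- (of_rat l + of_nat n)) ^ i * y l K $ n)"
proof (induction i)
  case 0 then show ?case using assms by simp
next
  case (Suc i)
  then have z: "\<forall>j>K. (Tn ^^ i) y l j = 0" by blast
  have "\<forall>j>K. Tn ((Tn ^^ i) y) l j = 0"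
    using z by (auto simp: Tn_nth fps_eq_iff)
  moreover have "Tn ((Tn ^^ i) y) l K $ n = (- (of_rat l + of_nat n)) ^ Suc i * y l K $ n" for n
    using Suc z by (simp add: Tn_nth) (simp add: algebra_simps)
  ultimately show ?case by simp
qed

lemma poly_op_top:
  assumes "\<forall>j>K. y l j = 0"
  shows "poly_op p Tn y l K $ n = poly p (- (of_rat l + of_nat n)) * y l K $ n"
  using Tn_pow_top[of K y l, OF assms]
  by (simp add: poly_op_nth poly_altdef sum_distrib_right mult.assoc)

lemma finite_row: assumes "\<phi> \<in> Xi" shows "finite {j. \<phi> l j \<noteq> 0}"
proof -
  have f: "finite {(l, j). \<phi> l j \<noteq> 0}" using assms by (simp add: Xi_def)
  show ?thesis by (rule finite_subset[OF _ finite_imageI[OF f, of snd]]) force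
qed

lemma root_of_support:
  assumes phi: "\<phi> \<in> Xi" and ann: "annihilates (theme_gen \<phi>) p" and nz: "\<phi> l j0 \<noteq> 0"
  shows "\<exists>m::nat. poly p (- (of_rat l + of_nat m)) = 0"
proof -
  let ?A = "{j. \<phi> l j \<noteq> 0}"
  define K where "K = Max ?A"
  have finA: "finite ?A" by (rule finite_row[OF phi])
  have "j0 \<in> ?A" using nz by simp
  then have K: "\<phi> l K \<noteq> 0" unfolding K_def using Max_in[OF finA] by blast
  let ?S = "saturation (theme_gen \<phi>)"
  have top: "\<forall>j>K. x l j = 0" if "x \<in> ?S" for x
  proof (intro allI impI)
    fix j assume "K < j"
    have "vanish l j \<phi>" unfolding vanish_def
    proof (intro allI impI)
      fix j' assume "j \<le> j'"
      then have "j' \<notin> ?A" using \<open>K < j\<close> Max_ge[OF finA] unfolding K_def by (meson le_less_trans not_le)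
      then show "\<phi> l j' = 0" by simp
    qed
    then show "x l j = 0" using sat_supp that supp_vanish[of x \<phi> l j] by (auto simp: vanish_def)
  qed
  have phiS: "\<phi> \<in> ?S" using theme_phi sat_base by blast
  define m where "m = (LEAST n. \<exists>x\<in>?S. x l K \<noteq> 0 \<and> subdegree (x l K) = n)"
  have ex: "\<exists>x\<in>?S. x l K \<noteq> 0 \<and> subdegree (x l K) = subdegree (\<phi> l K)" using phiS K by blast
  obtain x where x: "x \<in> ?S" "x l K \<noteq> 0" "subdegree (x l K) = m"
    using LeastI_ex[of "\<lambda>n. \<exists>x\<in>?S. x l K \<noteq> 0 \<and> subdegree (x l K) = n"] ex unfolding m_def by blast
  have minimal: "m \<le> subdegree (y l K)" if "y \<in> ?S" "y l K \<noteq> 0" for y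
    unfolding m_def by (rule Least_le) (use that in blast)
  obtain y where y: "y \<in> ?S" "poly_op p Tn x = xi_b y"
    using ann x(1) unfolding annihilates_Tn by blast
  have "poly_op p Tn x l K $ m = xi_b y l K $ m" using y by simp
  also have "\<dots> = 0"
  proof (cases m)
    case (Suc m')
    show ?thesis
    proof (cases "y l K = 0")
      case False
      then have "m' < subdegree (y l K)" using minimal[OF y(1) False] Suc by simp
      then show ?thesis using Suc by auto
    qed (simp add: Suc)
  qed simp
  finally have "poly p (- (of_rat l + of_nat m)) * x l K $ m = 0"
    using poly_op_top[of K x l, OF top[OF x(1)]] by simp
  moreover have "x l K $ m \<noteq> 0" using x by (metis nth_subdegree_nonzero)
  ultimately show ?thesis by auto
qed

lemma primitive_root:
  assumes phi: "\<phi> \<in> Xi" and prim: "lambda_primitive lam (theme_gen \<phi>)" and nz: "\<phi> l j \<noteq> 0"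
  shows "\<exists>k::int. of_rat l = lam + of_int k"
proof -
  obtain p where p: "is_bernstein_poly (theme_gen \<phi>) p"
    "\<And>z. poly p z = 0 \<Longrightarrow> \<exists>n::int. z = - lam + of_int n"
    using prim unfolding lambda_primitive_def by blast
  have "annihilates (theme_gen \<phi>) p" using p(1) by (simp add: is_bernstein_poly_def)
  then obtain m :: nat where "poly p (- (of_rat l + of_nat m)) = 0"
    using root_of_support[OF phi _ nz] by blast
  then obtain n :: int where "- (of_rat l + of_nat m) = - lam + of_int n" using p(2) by blast
  then have "of_rat l = lam + of_int (- n - int m)" by (simp add: algebra_simps)
  then show ?thesis by blast
qed

lemma single_l:
  assumes phi: "\<phi> \<in> Xi" and prim: "lambda_primitive lam (theme_gen \<phi>)"
    and nz1: "\<phi> l1 j1 \<noteq> 0" and nz2: "\<phi> l2 j2 \<noteq> 0"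
  shows "l1 = l2"
proof -
  obtain k1 :: int where k1: "of_rat l1 = lam + of_int k1" using primitive_root[OF phi prim nz1] by blast
  obtain k2 :: int where k2: "of_rat l2 = lam + of_int k2" using primitive_root[OF phi prim nz2] by blast
  have "(of_rat (l1 - l2) :: complex) = of_rat (of_int (k1 - k2))"
    using k1 k2 by (simp add: of_rat_diff)
  then have eq: "l1 - l2 = of_int (k1 - k2)" by (simp only: of_rat_eq_iff)
  have "0 < l1" "l1 \<le> 1" "0 < l2" "l2 \<le> 1" using phi nz1 nz2 by (auto simp: Xi_def)
  then have "of_int (k1 - k2) < (1::rat)" "(-1::rat) < of_int (k1 - k2)" using eq by linarith+
  then have "k1 - k2 = 0" by linarith
  then show ?thesis using eq by simp
qed




definition Sh :: "xi \<Rightarrow> xi" where "Sh x = (\<lambda>l j. x l (Suc j))"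

lemma Sh_nth [simp]: "Sh x l j = x l (Suc j)" by (simp add: Sh_def)

lemma Sh_a: "Sh (xi_a x) = xi_a (Sh x)" by (rule xi_eqI) (simp add: xi_a_nth)
lemma Sh_b: "Sh (xi_b x) = xi_b (Sh x)" by (rule xi_eqI) (simp add: xi_b_nth)
lemma Sh_add: "Sh (xi_add x y) = xi_add (Sh x) (Sh y)" by (simp add: xi_add_def Sh_def)
lemma Sh_smul: "Sh (xi_smul S x) = xi_smul S (Sh x)" by (simp add: xi_smul_def Sh_def)
lemma Sh_binva: "Sh (xi_binva x) = xi_binva (Sh x)" by (rule xi_eqI) simp
lemma Sh_neg: "Sh (xi_neg x) = xi_neg (Sh x)" by (simp add: xi_neg_def Sh_def)
lemma Sh_Tn: "Sh (Tn x) = Tn (Sh x)" by (simp add: Tn_def Sh_binva Sh_neg)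

lemma Sh_funpow: "(\<And>y. Sh (T y) = T (Sh y)) \<Longrightarrow> Sh ((T ^^ i) x) = (T ^^ i) (Sh x)"
  by (induction i) auto

lemma Sh_poly_op: "(\<And>y. Sh (T y) = T (Sh y)) \<Longrightarrow> Sh (poly_op p T x) = poly_op p T (Sh x)"
proof -
  assume c: "\<And>y. Sh (T y) = T (Sh y)"
  have f: "(T ^^ i) (Sh y) = Sh ((T ^^ i) y)" for i y using Sh_funpow[of T i y] c by metis
  show ?thesis
    by (rule xi_eqI) (simp add: poly_op_nth f)
qed

lemma Sh_act: "Sh (xi_act P x) = xi_act P (Sh x)"
proof (rule xi_eqI)
  fix l j n
  have "Sh (tm P x \<nu>) = tm P (Sh x) \<nu>" for \<nu>
    unfolding tm_def by (simp add: Sh_poly_op Sh_a Sh_funpow Sh_b)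
  then have "tm P x \<nu> l (Suc j) = tm P (Sh x) \<nu> l j" for \<nu>
    by (metis Sh_nth)
  then show "Sh (xi_act P x) l j $ n = xi_act P (Sh x) l j $ n"
    by (simp add: xi_act_nth)
qed

lemma act_zero: "xi_act P xi_zero = xi_zero"
proof -
  have "vanish l 0 (xi_act P xi_zero)" for l by (rule vanish_act) (simp add: vanish_def xi_zero_def)
  then show ?thesis by (auto simp: vanish_def xi_zero_def)
qed

lemma xi_smul_smul: "xi_smul S (xi_smul T x) = xi_smul (S * T) x"
  by (simp add: xi_smul_def mult.assoc)

lemma xi_b_smul_X: "xi_b x = xi_smul fps_X x" by (simp add: xi_b_def)

lemma comb_nth: "xi_add (xi_a y) (xi_smul (fps_const c) (xi_b y)) l j $ Suc n
   = (of_rat l + of_nat n + c) * y l j $ n + y l (Suc j) $ n"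
  by (simp add: algebra_simps)

lemma reduce:
  assumes nz: "x l (Suc K) \<noteq> 0" and top: "\<forall>j>Suc K. x l j = 0"
  defines "m \<equiv> subdegree (x l (Suc K))"
  defines "y \<equiv> xi_smul (inverse (fps_shift m (x l (Suc K)))) x"
  defines "x' \<equiv> xi_add (xi_a y) (xi_smul (fps_const (- (of_rat l + of_nat m))) (xi_b y))"
  shows "\<forall>j>K. x' l j = 0" "x' l K $ Suc m = 1"
proof -
  let ?s = "fps_shift m (x l (Suc K))"
  have s0: "?s $ 0 \<noteq> 0" using nz unfolding m_def by simp
  have "y l (Suc K) = inverse ?s * (?s * fps_X ^ m)"
    unfolding y_def xi_smul_def m_def by (metis subdegree_decompose)
  also have "\<dots> = fps_X ^ m" using inverse_mult_eq_1[OF s0] by (simp add: mult.assoc[symmetric])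
  finally have yK: "y l (Suc K) = fps_X ^ m" .
  have ytop: "y l j = 0" if "j > Suc K" for j using top that by (simp add: y_def xi_smul_def)
  have x'0: "x' l j $ 0 = 0" for j by (simp add: x'_def)
  have x'S: "x' l j $ Suc n = (of_nat n - of_nat m) * y l j $ n + y l (Suc j) $ n" for j n
    unfolding x'_def comb_nth by (simp add: algebra_simps)
  show "\<forall>j>K. x' l j = 0"
  proof (intro allI impI)
    fix j assume "K < j"
    show "x' l j = 0"
    proof (rule fps_ext)
      fix n show "x' l j $ n = 0 $ n"
      proof (cases n)
        case (Suc n')
        show ?thesis
        proof (cases "j = Suc K")
          case True then show ?thesis using Suc x'S ytop[of "Suc j"] yK by (simp add: fps_X_power_nth)
        next
          case False then show ?thesis using Suc x'S ytop[of j] ytop[of "Suc j"] \<open>K < j\<close> by simp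
        qed
      qed (simp add: x'0)
    qed
  qed
  show "x' l K $ Suc m = 1" using x'S yK by (simp add: fps_X_power_nth)
qed

locale theme_setup =
  fixes \<phi> :: xi and lam :: complex and l0 :: rat and j0 :: nat
  assumes phi: "\<phi> \<in> Xi" and prim: "lambda_primitive lam (theme_gen \<phi>)" and nz0: "\<phi> l0 j0 \<noteq> 0"
begin

abbreviation "E \<equiv> theme_gen \<phi>"
definition "Kmax = Max {j. \<phi> l0 j \<noteq> 0}"
definition "G = {x \<in> E. Sh x = xi_zero}"

lemma E_l0: assumes "x \<in> E" "l \<noteq> l0" shows "x l j = 0"
proof -
  have "vanish l 0 \<phi>" unfolding vanish_def using single_l[OF phi prim _ nz0] assms(2) by blast
  then show ?thesis using supp_vanish[of x \<phi> l 0] theme_supp assms(1) by (auto simp: vanish_def)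
qed

lemma E_top: assumes "x \<in> E" "Kmax < j" shows "x l j = 0"
proof (cases "l = l0")
  case True
  have fin: "finite {j. \<phi> l0 j \<noteq> 0}" by (rule finite_row[OF phi])
  have "vanish l0 j \<phi>" unfolding vanish_def
  proof (intro allI impI)
    fix j' assume "j \<le> j'"
    then show "\<phi> l0 j' = 0" using Max_ge[OF fin, of j'] assms(2) unfolding Kmax_def by fastforce
  qed
  then show ?thesis using True supp_vanish[of x \<phi> l0 j] theme_supp assms(1) by (auto simp: vanish_def)
qed (use E_l0 assms in auto)

lemma G_zero: assumes "g \<in> G" "(l, j) \<noteq> (l0, 0)" shows "g l j = 0"
proof (cases "l = l0")
  case True
  then obtain j' where "j = Suc j'" using assms(2) by (cases j) auto
  then show ?thesis using assms(1) unfolding G_def by (metis (mono_tags, lifting) Sh_nth mem_Collect_eq xi_zero_def)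
qed (use assms E_l0 in \<open>auto simp: G_def\<close>)

lemma G_nz: assumes "g \<in> G" "g \<noteq> xi_zero" shows "g l0 0 \<noteq> 0"
proof
  assume g00: "g l0 0 = 0"
  have "g = xi_zero"
  proof (intro ext)
    fix l j show "g l j = xi_zero l j"
      by (cases "(l,j) = (l0,0)") (use G_zero[OF assms(1), of l j] g00 in \<open>auto simp: xi_zero_def\<close>)
  qed
  then show False using assms(2) by simp
qed

lemma E_closed:
  assumes "x \<in> E" shows "xi_smul S x \<in> E" "xi_a x \<in> E" "xi_b x \<in> E" "xi_act P x \<in> E"
  using assms by (auto intro: theme_smul theme_a theme_b theme_act)

lemma comb_E: "y \<in> E \<Longrightarrow> xi_add (xi_a y) (xi_smul S (xi_b y)) \<in> E"
  by (intro theme_add theme_a theme_smul theme_b)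

lemma ex_G_aux: "\<forall>x\<in>E. x \<noteq> xi_zero \<longrightarrow> (\<forall>j>K. x l0 j = 0) \<longrightarrow> (\<exists>g\<in>G. g \<noteq> xi_zero)"
proof (induction K)
  case 0
  show ?case
  proof (intro ballI impI)
    fix x assume x: "x \<in> E" "x \<noteq> xi_zero" "\<forall>j>0. x l0 j = 0"
    have "Sh x = xi_zero"
    proof -
      have "x l (Suc j) = 0" for l j using x E_l0[OF x(1), of l] by (cases "l = l0") auto
      then show ?thesis by (auto simp: xi_zero_def Sh_def)
    qed
    then show "\<exists>g\<in>G. g \<noteq> xi_zero" using x unfolding G_def by blast
  qed
next
  case (Suc K)
  show ?case
  proof (intro ballI impI)
    fix x assume x: "x \<in> E" "x \<noteq> xi_zero" "\<forall>j>Suc K. x l0 j = 0"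
    show "\<exists>g\<in>G. g \<noteq> xi_zero"
    proof (cases "x l0 (Suc K) = 0")
      case True
      then have "\<forall>j>K. x l0 j = 0" using x(3) by (metis Suc_lessI)
      then show ?thesis using Suc.IH x by blast
    next
      case False
      define m where "m \<equiv> subdegree (x l0 (Suc K))"
      define y where "y \<equiv> xi_smul (inverse (fps_shift m (x l0 (Suc K)))) x"
      define x' where "x' \<equiv> xi_add (xi_a y) (xi_smul (fps_const (- (of_rat l0 + of_nat m))) (xi_b y))"
      have r: "\<forall>j>K. x' l0 j = 0" "x' l0 K $ Suc m = 1"
        using reduce[of x l0 K, OF False x(3)] unfolding x'_def y_def m_def by blast+
      have "y \<in> E" unfolding y_def by (rule theme_smul[OF x(1)])
      then have "x' \<in> E" unfolding x'_def by (rule comb_E)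
      moreover have "x' \<noteq> xi_zero" using r(2) by (auto simp: xi_zero_def)
      ultimately show ?thesis using Suc.IH r(1) by blast
    qed
  qed
qed

lemma phi_nz: "\<phi> \<noteq> xi_zero" using nz0 by (auto simp: xi_zero_def)

lemma ex_G: "\<exists>g\<in>G. g \<noteq> xi_zero"
  using ex_G_aux[of Kmax] theme_phi[of \<phi>] phi_nz E_top[OF theme_phi] by blast

definition "m0 = (LEAST n. \<exists>g\<in>G. g l0 0 \<noteq> 0 \<and> subdegree (g l0 0) = n)"
definition "g0 = (SOME g. g \<in> G \<and> g l0 0 \<noteq> 0 \<and> subdegree (g l0 0) = m0)"

lemma g0: "g0 \<in> G" "g0 l0 0 \<noteq> 0" "subdegree (g0 l0 0) = m0"
proof -
  obtain g where "g \<in> G" "g \<noteq> xi_zero" using ex_G by blast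
  then have "\<exists>n. \<exists>g\<in>G. g l0 0 \<noteq> 0 \<and> subdegree (g l0 0) = n" using G_nz by blast
  then have "\<exists>g\<in>G. g l0 0 \<noteq> 0 \<and> subdegree (g l0 0) = m0"
    unfolding m0_def by (rule LeastI_ex)
  then have "g0 \<in> G \<and> g0 l0 0 \<noteq> 0 \<and> subdegree (g0 l0 0) = m0"
    unfolding g0_def by (metis (mono_tags, lifting) someI_ex)
  then show "g0 \<in> G" "g0 l0 0 \<noteq> 0" "subdegree (g0 l0 0) = m0" by auto
qed

lemma m0_min: "g \<in> G \<Longrightarrow> g l0 0 \<noteq> 0 \<Longrightarrow> m0 \<le> subdegree (g l0 0)"
  unfolding m0_def by (rule Least_le) blast

lemma G_closed_smul: assumes "z \<in> G" shows "xi_smul S z \<in> G"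
proof -
  have "z \<in> E" "Sh z = xi_zero" using assms by (auto simp: G_def)
  moreover have "xi_smul S xi_zero = xi_zero" by (simp add: xi_smul_def xi_zero_def)
  ultimately show ?thesis unfolding G_def by (auto intro: theme_smul simp: Sh_smul)
qed

lemma G_char: assumes "z \<in> G" shows "\<exists>S. z = xi_smul S g0"
proof (cases "z l0 0 = 0")
  case True
  have "z = xi_zero"
  proof (intro ext)
    fix l j show "z l j = xi_zero l j"
      by (cases "(l,j) = (l0,0)") (use G_zero[OF assms, of l j] True in \<open>auto simp: xi_zero_def\<close>)
  qed
  moreover have "xi_zero = xi_smul 0 g0" by (simp add: xi_zero_def xi_smul_def)
  ultimately show ?thesis by blast
next
  case False
  define k where "k = subdegree (z l0 0)"
  have km: "m0 \<le> k" using m0_min[OF assms False] k_def by simp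
  define zs where "zs = fps_shift k (z l0 0)"
  define gs where "gs = fps_shift m0 (g0 l0 0)"
  have gs0: "gs $ 0 \<noteq> 0" unfolding gs_def using g0(2) by (simp add: g0(3)[symmetric])
  have zd: "z l0 0 = zs * fps_X ^ k" unfolding zs_def k_def by (rule subdegree_decompose)
  have gd: "g0 l0 0 = gs * fps_X ^ m0" unfolding gs_def using g0(3) by (metis subdegree_decompose)
  define S where "S = fps_X ^ (k - m0) * zs * inverse gs"
  have "S * g0 l0 0 = fps_X ^ (k - m0) * fps_X ^ m0 * zs * (inverse gs * gs)"
    unfolding S_def gd by (simp add: algebra_simps)
  also have "\<dots> = z l0 0" using inverse_mult_eq_1[OF gs0] km zd
    by (simp add: power_add[symmetric] algebra_simps)
  finally have eq: "S * g0 l0 0 = z l0 0" .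
  have "z = xi_smul S g0"
  proof (intro ext)
    fix l j show "z l j = xi_smul S g0 l j"
      using eq G_zero[OF assms, of l j] G_zero[OF g0(1), of l j] by (cases "(l, j) = (l0, 0)") (auto simp: xi_smul_def)
  qed
  then show ?thesis by blast
qed

lemma G_sub: "sub_module G"
  unfolding sub_module_def
proof (intro conjI ballI allI)
  fix x y assume "x \<in> G" "y \<in> G"
  moreover have "xi_add xi_zero xi_zero = xi_zero" by (simp add: xi_add_def xi_zero_def)
  ultimately show "xi_add x y \<in> G" unfolding G_def by (auto intro: theme_add simp: Sh_add)
next
  fix P x assume "x \<in> G"
  then show "xi_act P x \<in> G" unfolding G_def by (auto intro: theme_act simp: Sh_act act_zero)
qed

lemma G_range: "G = range (\<lambda>S. xi_smul S g0)"
  using G_char G_closed_smul[OF g0(1)] by blast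

lemma G_rank1: "rank1_sub E G"
  unfolding rank1_sub_def
proof (intro conjI)
  show "G \<subseteq> E" by (auto simp: G_def)
  show "sub_module G" by (rule G_sub)
  have "inj (\<lambda>S. xi_smul S g0)"
  proof
    fix S T assume "xi_smul S g0 = xi_smul T g0"
    then have "S * g0 l0 0 = T * g0 l0 0" by (metis xi_smul_def)
    then show "S = T" using g0(2) by simp
  qed
  then show "\<exists>f. bij_betw (\<lambda>S. xi_smul S f) UNIV G" using G_range by (metis bij_betw_imageI)
qed

lemma b_inj: "xi_b y = xi_zero \<Longrightarrow> y = xi_zero"
proof (rule xi_eqI)
  fix l j n assume "xi_b y = xi_zero"
  then have "xi_b y l j $ Suc n = 0" by simp
  then show "y l j $ n = xi_zero l j $ n" by simp
qed

lemma G_normal: "normal_sub E G"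
  unfolding normal_sub_def
proof
  show "G \<inter> xi_b ` E \<subseteq> xi_b ` G"
  proof
    fix z assume "z \<in> G \<inter> xi_b ` E"
    then obtain y where y: "y \<in> E" "z = xi_b y" "z \<in> G" by blast
    then have "xi_b (Sh y) = xi_zero" unfolding G_def by (simp add: Sh_b)
    then have "y \<in> G" using y(1) b_inj unfolding G_def by blast
    then show "z \<in> xi_b ` G" using y by blast
  qed
  show "xi_b ` G \<subseteq> G \<inter> xi_b ` E"
  proof
    fix z assume "z \<in> xi_b ` G"
    then obtain y where y: "y \<in> G" "z = xi_b y" by blast
    have "y \<in> E" "Sh y = xi_zero" using y(1) by (auto simp: G_def)
    moreover have "xi_b xi_zero = xi_zero" by (rule xi_eqI) (simp add: xi_b_nth)
    ultimately have "z \<in> G" unfolding G_def y(2) by (auto intro: theme_b simp: Sh_b)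
    then show "z \<in> G \<inter> xi_b ` E" using y unfolding G_def by blast
  qed
qed

end




section \<open>Annihilators\<close>

lemma ann_zero: "annihilates E 0"
  unfolding annihilates_Tn
proof
  fix x assume x: "x \<in> saturation E"
  have "poly_op 0 Tn x = xi_b (xi_smul 0 x)" by (rule xi_eqI) (simp add: poly_op_zero xi_b_nth xi_smul_def)
  then show "poly_op 0 Tn x \<in> xi_b ` saturation E" using sat_smul[OF x] by blast
qed

lemma ann_add: "annihilates E p \<Longrightarrow> annihilates E q \<Longrightarrow> annihilates E (p + q)"
  unfolding annihilates_Tn
proof
  fix x assume p: "\<forall>x\<in>saturation E. poly_op p Tn x \<in> xi_b ` saturation E"
    and q: "\<forall>x\<in>saturation E. poly_op q Tn x \<in> xi_b ` saturation E" and x: "x \<in> saturation E"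
  obtain y z where "y \<in> saturation E" "poly_op p Tn x = xi_b y" "z \<in> saturation E" "poly_op q Tn x = xi_b z"
    using p q x by blast
  then show "poly_op (p + q) Tn x \<in> xi_b ` saturation E"
    using sat_add by (simp add: poly_op_add xi_b_add[symmetric])
qed

lemma ann_smult: "annihilates E p \<Longrightarrow> annihilates E (smult c p)"
  unfolding annihilates_Tn
proof
  fix x assume p: "\<forall>x\<in>saturation E. poly_op p Tn x \<in> xi_b ` saturation E" and x: "x \<in> saturation E"
  obtain y where "y \<in> saturation E" "poly_op p Tn x = xi_b y" using p x by blast
  then show "poly_op (smult c p) Tn x \<in> xi_b ` saturation E"
    using sat_smul by (simp add: poly_op_smult xi_b_smul[symmetric])
qed

lemma sat_Tn: "x \<in> saturation E \<Longrightarrow> Tn x \<in> saturation E"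
  unfolding Tn_def xi_neg_smul by (intro sat_smul sat_binva)

lemma ann_pCons0: "annihilates E p \<Longrightarrow> annihilates E (pCons 0 p)"
  unfolding annihilates_Tn poly_op_pCons0_right using sat_Tn by blast

lemma ann_mult: "annihilates E q \<Longrightarrow> annihilates E (r * q)"
proof (induction r rule: pCons_induct)
  case 0 then show ?case by (simp add: ann_zero)
next
  case (pCons c r)
  then show ?case by (simp add: ann_add ann_smult ann_pCons0)
qed

lemma bernstein_exists:
  assumes ann: "annihilates E p" and p0: "p \<noteq> 0"
  shows "\<exists>q. is_bernstein_poly E q \<and> (\<forall>z. poly q z = 0 \<longrightarrow> poly p z = 0)"
proof -
  define n0 where "n0 = (LEAST n. \<exists>q. q \<noteq> 0 \<and> annihilates E q \<and> degree q = n)"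
  have "\<exists>q. q \<noteq> 0 \<and> annihilates E q \<and> degree q = n0"
    unfolding n0_def by (rule LeastI_ex) (use ann p0 in blast)
  then obtain q0 where q0: "q0 \<noteq> 0" "annihilates E q0" "degree q0 = n0" by blast
  have minimal: "n0 \<le> degree q'" if "q' \<noteq> 0" "annihilates E q'" for q'
    unfolding n0_def by (rule Least_le) (use that in blast)
  define q where "q = smult (inverse (lead_coeff q0)) q0"
  have lc: "lead_coeff q0 \<noteq> 0" using q0(1) leading_coeff_0_iff by blast
  have q: "lead_coeff q = 1" "annihilates E q" "degree q = n0" "q \<noteq> 0"
    using q0 lc by (auto simp: q_def ann_smult)
  have bern: "is_bernstein_poly E q"
    unfolding is_bernstein_poly_def using q minimal by auto
  have "p mod q = p + smult (-1) (p div q * q)"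
    using minus_div_mult_eq_mod[of p q] by simp
  moreover have "annihilates E (p + smult (-1) (p div q * q))"
    by (rule ann_add[OF ann ann_smult[OF ann_mult[OF q(2)]]])
  ultimately have annr: "annihilates E (p mod q)" by simp
  have "p mod q = 0"
  proof (rule ccontr)
    assume r: "p mod q \<noteq> 0"
    then have "degree (p mod q) < degree q" using degree_mod_less[OF q(4), of p] r by simp
    moreover have "n0 \<le> degree (p mod q)" using minimal[OF r annr] .
    ultimately show False using q(3) by simp
  qed
  then have "q dvd p" by (simp add: mod_eq_0_iff_dvd)
  then have "\<forall>z. poly q z = 0 \<longrightarrow> poly p z = 0" by (auto elim!: dvdE)
  then show ?thesis using bern by blast
qed

section \<open>Shift and saturation\<close>

lemma sat_Sh1: "saturation (Sh ` E) \<subseteq> Sh ` saturation E"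
proof (rule sat_sub)
  show "Sh ` E \<subseteq> Sh ` saturation E" using sat_base by blast
next
  fix x y assume "x \<in> Sh ` saturation E" "y \<in> Sh ` saturation E"
  then obtain a b where ab: "a \<in> saturation E" "b \<in> saturation E" "x = Sh a" "y = Sh b" by blast
  then have "xi_add x y = Sh (xi_add a b)" by (simp add: Sh_add)
  then show "xi_add x y \<in> Sh ` saturation E" using sat_add[OF ab(1,2)] by blast
next
  fix S x assume "x \<in> Sh ` saturation E"
  then obtain a where a: "a \<in> saturation E" "x = Sh a" by blast
  then have "xi_smul S x = Sh (xi_smul S a)" by (simp add: Sh_smul)
  then show "xi_smul S x \<in> Sh ` saturation E" using sat_smul[OF a(1)] by blast
next
  fix x assume "x \<in> Sh ` saturation E"
  then obtain a where a: "a \<in> saturation E" "x = Sh a" by blast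
  then have "xi_binva x = Sh (xi_binva a)" by (simp add: Sh_binva)
  then show "xi_binva x \<in> Sh ` saturation E" using sat_binva[OF a(1)] by blast
qed

lemma sat_Sh2: "x \<in> saturation E \<Longrightarrow> Sh x \<in> saturation (Sh ` E)"
proof -
  have "saturation E \<subseteq> {x. Sh x \<in> saturation (Sh ` E)}"
  proof (rule sat_sub)
    show "E \<subseteq> {x. Sh x \<in> saturation (Sh ` E)}" using sat_base by blast
  qed (auto simp: Sh_add Sh_smul Sh_binva intro: sat_add sat_smul sat_binva)
  then show "x \<in> saturation E \<Longrightarrow> Sh x \<in> saturation (Sh ` E)" by blast
qed

lemma ann_Sh: assumes "annihilates E p" shows "annihilates (Sh ` E) p"
  unfolding annihilates_Tn
proof
  fix y assume "y \<in> saturation (Sh ` E)"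
  then obtain x where x: "x \<in> saturation E" "y = Sh x" using sat_Sh1 by blast
  obtain z where z: "z \<in> saturation E" "poly_op p Tn x = xi_b z"
    using assms x(1) unfolding annihilates_Tn by blast
  have "poly_op p Tn y = Sh (poly_op p Tn x)" unfolding x(2) by (rule Sh_poly_op[symmetric]) (rule Sh_Tn)
  also have "\<dots> = xi_b (Sh z)" using z(2) by (simp add: Sh_b)
  finally show "poly_op p Tn y \<in> xi_b ` saturation (Sh ` E)" using sat_Sh2[OF z(1)] by blast
qed

lemma prim_Sh: assumes "lambda_primitive lam E" shows "lambda_primitive lam (Sh ` E)"
proof -
  obtain p where p: "is_bernstein_poly E p" "\<And>z. poly p z = 0 \<Longrightarrow> \<exists>n::int. z = - lam + of_int n"
    using assms unfolding lambda_primitive_def by blast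
  have "annihilates E p" "p \<noteq> 0" using p(1) by (auto simp: is_bernstein_poly_def)
  then obtain q where "is_bernstein_poly (Sh ` E) q" "\<forall>z. poly q z = 0 \<longrightarrow> poly p z = 0"
    using bernstein_exists ann_Sh by blast
  then show ?thesis unfolding lambda_primitive_def using p(2) by blast
qed




context theme_setup begin

lemma unique: assumes r: "rank1_sub E F" and n: "normal_sub E F" shows "F = G"
proof -
  obtain f where bij: "bij_betw (\<lambda>S. xi_smul S f) UNIV F" using r unfolding rank1_sub_def by blast
  have Frange: "F = range (\<lambda>S. xi_smul S f)" using bij by (simp add: bij_betw_def)
  have inj: "inj (\<lambda>S. xi_smul S f)" using bij by (simp add: bij_betw_def)
  have FE: "F \<subseteq> E" and subF: "sub_module F" using r by (auto simp: rank1_sub_def)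
  have f1: "xi_smul 1 f = f" by (simp add: xi_smul_def)
  have fF: "f \<in> F" using Frange f1 by (metis rangeI)
  have fE: "f \<in> E" using fF FE by blast
  have F_smul: "xi_smul S z \<in> F" if zF: "z \<in> F" for S z
  proof -
    obtain T where "z = xi_smul T f" using zF Frange by blast
    then have "xi_smul S z = xi_smul (S * T) f" by (simp add: xi_smul_smul)
    then show ?thesis using Frange by simp
  qed
  have F_act: "xi_act P z \<in> F" if "z \<in> F" for P z using that subF by (simp add: sub_module_def)
  have F_add: "xi_add y z \<in> F" if "y \<in> F" "z \<in> F" for y z using that subF by (simp add: sub_module_def)
  have sh: "\<forall>j. f l0 (Suc j) = 0"
  proof (rule ccontr)
    assume "\<not> (\<forall>j. f l0 (Suc j) = 0)"
    then obtain j1 where j1: "f l0 (Suc j1) \<noteq> 0" by blast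
    define A where "A = {j. f l0 (Suc j) \<noteq> 0}"
    have "A \<subseteq> {..Kmax}" unfolding A_def using E_top[OF fE] by (auto simp: not_less[symmetric])
    then have finA: "finite A" by (rule finite_subset) simp
    define K where "K = Max A"
    have "j1 \<in> A" using j1 A_def by simp
    then have nzK: "f l0 (Suc K) \<noteq> 0" using Max_in[OF finA] unfolding K_def A_def by auto
    have topK: "\<forall>j>Suc K. f l0 j = 0"
    proof (intro allI impI)
      fix j assume "Suc K < j"
      then obtain j' where j': "j = Suc j'" "K < j'" by (cases j) auto
      then have "j' \<notin> A" using Max_ge[OF finA, of j'] unfolding K_def by auto
      then show "f l0 j = 0" using j' by (simp add: A_def)
    qed
    define m where "m \<equiv> subdegree (f l0 (Suc K))"
    define y where "y \<equiv> xi_smul (inverse (fps_shift m (f l0 (Suc K)))) f"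
    define x' where "x' \<equiv> xi_add (xi_a y) (xi_smul (fps_const (- (of_rat l0 + of_nat m))) (xi_b y))"
    have red: "\<forall>j>K. x' l0 j = 0" "x' l0 K $ Suc m = 1"
      using reduce[of f l0 K, OF nzK topK] unfolding x'_def y_def m_def by blast+
    have yF: "y \<in> F" unfolding y_def by (rule F_smul[OF fF])
    have "xi_a y \<in> F" unfolding xi_a_as_act by (rule F_act[OF yF])
    moreover have "xi_b y \<in> F" unfolding xi_b_as_act by (rule F_act[OF yF])
    ultimately have "x' \<in> F" unfolding x'_def by (intro F_add F_smul)
    then obtain S where S: "x' = xi_smul S f" using Frange by blast
    have "S * f l0 (Suc K) = 0" using red(1) S by (simp add: xi_smul_def)
    then have "S = 0" using nzK by simp
    then have "x' l0 K = 0" using S by (simp add: xi_smul_def)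
    then show False using red(2) by simp
  qed
  have fG: "f \<in> G"
  proof -
    have "Sh f = xi_zero"
    proof (intro ext)
      fix l j show "Sh f l j = xi_zero l j"
        using sh E_l0[OF fE, of l] by (cases "l = l0") (auto simp: xi_zero_def)
    qed
    then show ?thesis using fE by (simp add: G_def)
  qed
  have fnz: "f \<noteq> xi_zero"
  proof
    assume "f = xi_zero"
    then have "xi_smul 0 f = xi_smul 1 f" by (simp add: xi_smul_def xi_zero_def)
    then show False using inj by (metis injD zero_neq_one)
  qed
  have f00: "f l0 0 \<noteq> 0" by (rule G_nz[OF fG fnz])
  obtain S0 where S0: "f = xi_smul S0 g0" using G_char[OF fG] by blast
  have S00: "S0 $ 0 \<noteq> 0"
  proof
    assume s: "S0 $ 0 = 0"
    have dec: "S0 = fps_X * fps_shift 1 S0"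
      by (rule fps_ext) (use s in \<open>auto simp: fps_X_mult_nth\<close>)
    define w1 where "w1 = xi_smul (fps_shift 1 S0) g0"
    have "w1 \<in> G" unfolding w1_def by (rule G_closed_smul[OF g0(1)])
    then have w1E: "w1 \<in> E" by (simp add: G_def)
    have "f = xi_b w1" unfolding S0 w1_def xi_b_smul_X xi_smul_smul using dec by simp
    then have "f \<in> F \<inter> xi_b ` E" using fF w1E by blast
    then have "f \<in> xi_b ` F" using n unfolding normal_sub_def by blast
    then obtain w where w: "w \<in> F" "f = xi_b w" by blast
    obtain T where wT: "w = xi_smul T f" using Frange w(1) by blast
    have "f = xi_smul fps_X w" using w(2) by (simp only: xi_b_smul_X)
    also have "\<dots> = xi_smul (fps_X * T) f" by (simp only: wT xi_smul_smul)
    finally have "f = xi_smul (fps_X * T) f" .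
    then have "1 * f l0 0 = (fps_X * T) * f l0 0" by (metis mult_1 xi_smul_def)
    then have "(1::complex fps) = fps_X * T" using f00 by (metis mult_right_cancel)
    then have "(1::complex fps) $ 0 = (fps_X * T) $ 0" by simp
    then show False by simp
  qed
  have "xi_smul (inverse S0) f = g0"
    unfolding S0 xi_smul_smul using inverse_mult_eq_1[OF S00] by (simp add: xi_smul_def)
  then have g0F: "g0 \<in> F" using F_smul[OF fF] by metis
  have "G \<subseteq> F" unfolding G_range using F_smul[OF g0F] by auto
  moreover have "F \<subseteq> G" unfolding Frange using G_closed_smul[OF fG] by auto
  ultimately show ?thesis by blast
qed

lemma psi_Xi: "Sh \<phi> \<in> Xi"
proof -
  have f: "finite {(l, j). \<phi> l j \<noteq> 0}" and r: "\<forall>l j. \<phi> l j \<noteq> 0 \<longrightarrow> 0 < l \<and> l \<le> 1"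
    using phi by (auto simp: Xi_def)
  have "{(l, j). Sh \<phi> l j \<noteq> 0} \<subseteq> (\<lambda>(l, j). (l, j - 1)) ` {(l, j). \<phi> l j \<noteq> 0}"
  proof
    fix p assume "p \<in> {(l, j). Sh \<phi> l j \<noteq> 0}"
    then obtain l j where "p = (l, j)" "\<phi> l (Suc j) \<noteq> 0" by auto
    then show "p \<in> (\<lambda>(l, j). (l, j - 1)) ` {(l, j). \<phi> l j \<noteq> 0}"
      by (intro image_eqI[of _ _ "(l, Suc j)"]) auto
  qed
  then have "finite {(l, j). Sh \<phi> l j \<noteq> 0}" using finite_subset f by blast
  moreover have "\<forall>l j. Sh \<phi> l j \<noteq> 0 \<longrightarrow> 0 < l \<and> l \<le> 1" using r by (simp only: Sh_nth) blast
  ultimately show ?thesis unfolding Xi_def by blast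
qed

lemma quotient: "quotient_primitive_theme lam E G"
  unfolding quotient_primitive_theme_def
proof (rule bexI[OF _ psi_Xi], rule exI[of _ Sh], intro conjI ballI allI)
  fix x y show "Sh (xi_add x y) = xi_add (Sh x) (Sh y)" by (rule Sh_add)
next
  fix P x show "Sh (xi_act P x) = xi_act P (Sh x)" by (rule Sh_act)
next
  show img: "Sh ` E = theme_gen (Sh \<phi>)" unfolding theme_gen_def image_image Sh_act by simp
  show "{x \<in> E. Sh x = xi_zero} = G" by (simp add: G_def)
  show "lambda_primitive lam (theme_gen (Sh \<phi>))" using prim_Sh[OF prim] img by simp
qed

end

theorem main_result:
  fixes lam :: complex and \<phi> :: xi
  assumes "\<phi> \<in> Xi" and "\<phi> \<noteq> xi_zero"
    and "lambda_primitive lam (theme_gen \<phi>)"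
  shows "(\<exists>!F. rank1_sub (theme_gen \<phi>) F \<and> normal_sub (theme_gen \<phi>) F)
       \<and> (\<forall>F. rank1_sub (theme_gen \<phi>) F \<and> normal_sub (theme_gen \<phi>) F
              \<longrightarrow> quotient_primitive_theme lam (theme_gen \<phi>) F)"
proof -
  have "\<exists>l j. \<phi> l j \<noteq> 0"
  proof (rule ccontr)
    assume "\<not> (\<exists>l j. \<phi> l j \<noteq> 0)"
    then have "\<phi> = xi_zero" by (intro ext) (auto simp: xi_zero_def)
    then show False using assms(2) by simp
  qed
  then obtain l0 j0 where "\<phi> l0 j0 \<noteq> 0" by blast
  then interpret T: theme_setup \<phi> lam l0 j0 using assms by unfold_locales auto
  have ex: "\<exists>!F. rank1_sub (theme_gen \<phi>) F \<and> normal_sub (theme_gen \<phi>) F"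
  proof (rule ex1I[of _ T.G])
    show "rank1_sub (theme_gen \<phi>) T.G \<and> normal_sub (theme_gen \<phi>) T.G"
      using T.G_rank1 T.G_normal by blast
  next
    fix F assume "rank1_sub (theme_gen \<phi>) F \<and> normal_sub (theme_gen \<phi>) F"
    then show "F = T.G" using T.unique by blast
  qed
  have q: "\<forall>F. rank1_sub (theme_gen \<phi>) F \<and> normal_sub (theme_gen \<phi>) F
              \<longrightarrow> quotient_primitive_theme lam (theme_gen \<phi>) F"
    using T.unique T.quotient by blast
  show ?thesis using ex q by blast
qed


theorem proposition3p4:
  fixes lam :: complex and \<phi> :: xi
  assumes "\<phi> \<in> Xi" and "\<phi> \<noteq> xi_zero"
    and "lambda_primitive lam (theme_gen \<phi>)"
  shows "(\<exists>!F. rank1_sub (theme_gen \<phi>) F \<and> normal_sub (theme_gen \<phi>) F)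
       \<and> (\<forall>F. rank1_sub (theme_gen \<phi>) F \<and> normal_sub (theme_gen \<phi>) F
              \<longrightarrow> quotient_primitive_theme lam (theme_gen \<phi>) F)"
  using main_result[OF assms] .

end
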